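(* Let $d$ be an even positive integer. Then $\tilde M^{(d)}$ equals the set of submatrices, indexed by $[N]^{d/2}\times[N]^{d/2}$, of matrices $\bm Z\in M^{(d)}$.
   Context: For a finite alphabet $[N]$, $[N]^{\le k}$ is the set of strings (including the empty string) of length at most $k$ over $[N]$; $\bm s\circ\bm t$ is concatenation; $\mathsf{odd}(\bm s)$ is the set of symbols occurring an odd number of times in $\bm s$. $M^{(d)}$ (degree $d$ complete pseudomoment matrices) is the set of real matrices $\bm Z$ with rows and columns indexed by $[N]^{\le d/2}$ such that (1) $\bm Z\succeq 0$; (2) $Z_{\bm s\bm t}$ depends only on $\mathsf{odd}(\bm s\circ\bm t)$; (3) $Z_{\bm s\bm t} = 1$ whenever $\mathsf{odd}(\bm s\circ\bm t)=\emptyset$. $\tilde M^{(d)}$ (degree $d$ truncated pseudomoment matrices) is the set of real matrices $\tilde{\bm Z}$ with rows and columns indexed by $[N]^{d/2}$ (strings of length exactly $d/2$) satisfying the same three conditions for $\bm s,\bm t\in[N]^{d/2}$. *)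

theory Defs
  imports Complex_Main
begin

text \<open>Matrices indexed by strings are functions nat list => nat list => real; a matrix with
index set I is required to vanish outside I x I (so that it is determined by its I x I block).\<close>

definition strs_le :: "nat \<Rightarrow> nat \<Rightarrow> nat list set" where
  "strs_le N k = {s. set s \<subseteq> {1..N} \<and> length s \<le> k}"

definition strs_eq :: "nat \<Rightarrow> nat \<Rightarrow> nat list set" where
  "strs_eq N k = {s. set s \<subseteq> {1..N} \<and> length s = k}"

definition odd_syms :: "nat list \<Rightarrow> nat set" where
  "odd_syms s = {a. odd (count_list s a)}"

definition psd_on :: "nat list set \<Rightarrow> (nat list \<Rightarrow> nat list \<Rightarrow> real) \<Rightarrow> bool" where
  "psd_on I Z \<longleftrightarrow> (\<forall>s\<in>I. \<forall>t\<in>I. Z s t = Z t s) \<and>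
     (\<forall>v :: nat list \<Rightarrow> real. 0 \<le> (\<Sum>s\<in>I. \<Sum>t\<in>I. v s * Z s t * v t))"

definition pseudomoment_on :: "nat list set \<Rightarrow> (nat list \<Rightarrow> nat list \<Rightarrow> real) \<Rightarrow> bool" where
  "pseudomoment_on I Z \<longleftrightarrow>
     (\<forall>s t. s \<notin> I \<or> t \<notin> I \<longrightarrow> Z s t = 0) \<and>
     psd_on I Z \<and>
     (\<forall>s\<in>I. \<forall>t\<in>I. \<forall>s'\<in>I. \<forall>t'\<in>I.
        odd_syms (s @ t) = odd_syms (s' @ t') \<longrightarrow> Z s t = Z s' t') \<and>
     (\<forall>s\<in>I. \<forall>t\<in>I. odd_syms (s @ t) = {} \<longrightarrow> Z s t = 1)"

definition complete_pm :: "nat \<Rightarrow> nat \<Rightarrow> (nat list \<Rightarrow> nat list \<Rightarrow> real) set" where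
  "complete_pm N d = {Z. pseudomoment_on (strs_le N (d div 2)) Z}"

definition truncated_pm :: "nat \<Rightarrow> nat \<Rightarrow> (nat list \<Rightarrow> nat list \<Rightarrow> real) set" where
  "truncated_pm N d = {Z. pseudomoment_on (strs_eq N (d div 2)) Z}"

definition submatrix :: "nat list set \<Rightarrow> (nat list \<Rightarrow> nat list \<Rightarrow> real) \<Rightarrow> nat list \<Rightarrow> nat list \<Rightarrow> real" where
  "submatrix I Z = (\<lambda>s t. if s \<in> I \<and> t \<in> I then Z s t else 0)"

end

theory Submission
  imports Defs
begin

lemma count_list_replicate': "count_list (replicate n a) x = (if x = a then n else 0)"
  by (induction n) auto

lemma odd_syms_cons: "odd_syms (x # xs) = (if x \<in> odd_syms xs then odd_syms xs - {x} else insert x (odd_syms xs))"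
  unfolding odd_syms_def by auto

lemma finite_odd_syms: "finite (odd_syms xs)"
proof -
  have "odd_syms xs \<subseteq> set xs" unfolding odd_syms_def using count_notin by fastforce
  thus ?thesis by (rule finite_subset) simp
qed

lemma parity_odd_syms: "even (length xs) \<longleftrightarrow> even (card (odd_syms xs))"
proof (induction xs)
  case Nil then show ?case by (simp add: odd_syms_def)
next
  case (Cons x xs)
  have f: "finite (odd_syms xs)" by (rule finite_odd_syms)
  show ?case
  proof (cases "x \<in> odd_syms xs")
    case True
    then have "card (odd_syms (x#xs)) = card (odd_syms xs) - 1" "card (odd_syms xs) > 0"
      using f by (auto simp: odd_syms_cons card_gt_0_iff)
    then show ?thesis using Cons by auto
  next
    case False
    then have "card (odd_syms (x#xs)) = Suc (card (odd_syms xs))"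
      using f by (auto simp: odd_syms_cons)
    then show ?thesis using Cons by auto
  qed
qed

lemma finite_strs_le: "finite (strs_le N k)"
  unfolding strs_le_def by (rule finite_lists_length_le) simp

lemma finite_strs_eq: "finite (strs_eq N k)"
  unfolding strs_eq_def by (rule finite_lists_length_eq) simp

lemma strs_eq_sub: "strs_eq N k \<subseteq> strs_le N k"
  unfolding strs_eq_def strs_le_def by auto

lemma pullback_psd:
  assumes fI: "finite I" and fJ: "finite J" and fm: "f ` I \<subseteq> J"
    and psd: "\<forall>v :: nat list \<Rightarrow> real. 0 \<le> (\<Sum>s\<in>J. \<Sum>t\<in>J. v s * Z s t * v t)"
  shows "0 \<le> (\<Sum>s\<in>I. \<Sum>t\<in>I. w s * Z (f s) (f t) * w t)"
proof -
  define W where "W u = (\<Sum>s\<in>{s\<in>I. f s = u}. w s)" for u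
  have inner: "(\<Sum>t\<in>I. w s * Z (f s) (f t) * w t) = (\<Sum>u'\<in>J. w s * Z (f s) u' * W u')" for s
  proof -
    have "(\<Sum>t\<in>I. w s * Z (f s) (f t) * w t) = (\<Sum>u'\<in>J. \<Sum>t\<in>{t\<in>I. f t = u'}. w s * Z (f s) (f t) * w t)"
      using sum.group[OF fI fJ fm, of "\<lambda>t. w s * Z (f s) (f t) * w t"] by simp
    also have "\<dots> = (\<Sum>u'\<in>J. \<Sum>t\<in>{t\<in>I. f t = u'}. w s * Z (f s) u' * w t)"
      by (intro sum.cong) auto
    also have "\<dots> = (\<Sum>u'\<in>J. w s * Z (f s) u' * W u')"
      by (simp add: W_def sum_distrib_left)
    finally show ?thesis .
  qed
  have "(\<Sum>s\<in>I. \<Sum>t\<in>I. w s * Z (f s) (f t) * w t) = (\<Sum>s\<in>I. \<Sum>u'\<in>J. w s * Z (f s) u' * W u')"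
    using inner by simp
  also have "\<dots> = (\<Sum>u'\<in>J. \<Sum>s\<in>I. w s * Z (f s) u' * W u')" by (rule sum.swap)
  also have "\<dots> = (\<Sum>u'\<in>J. \<Sum>u\<in>J. \<Sum>s\<in>{s\<in>I. f s = u}. w s * Z (f s) u' * W u')"
    by (intro sum.cong refl) (rule sum.group[OF fI fJ fm, symmetric])
  also have "\<dots> = (\<Sum>u'\<in>J. \<Sum>u\<in>J. \<Sum>s\<in>{s\<in>I. f s = u}. w s * Z u u' * W u')"
    by (intro sum.cong refl) auto
  also have "\<dots> = (\<Sum>u'\<in>J. \<Sum>u\<in>J. W u * Z u u' * W u')"
    by (intro sum.cong refl) (simp add: W_def sum_distrib_right)
  also have "\<dots> = (\<Sum>u\<in>J. \<Sum>u'\<in>J. W u * Z u u' * W u')" by (rule sum.swap)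
  finally show ?thesis using psd by simp
qed

lemma easy_dir:
  assumes "Z \<in> complete_pm N d"
  shows "submatrix (strs_eq N (d div 2)) Z \<in> truncated_pm N d"
proof -
  let ?I = "strs_le N (d div 2)" and ?J = "strs_eq N (d div 2)"
  have sub: "?J \<subseteq> ?I" by (rule strs_eq_sub)
  have P: "pseudomoment_on ?I Z" using assms by (simp add: complete_pm_def)
  note PP = P[unfolded pseudomoment_on_def]
  note Ppsd = conjunct1[OF conjunct2[OF PP]]
  note Pc = conjunct1[OF conjunct2[OF conjunct2[OF PP]]]
  note P1 = conjunct2[OF conjunct2[OF conjunct2[OF PP]]]
  have psd: "psd_on ?J (submatrix ?J Z)"
    unfolding psd_on_def
  proof (intro conjI allI ballI)
    fix s t assume a: "s \<in> ?J" "t \<in> ?J"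
    have "Z s t = Z t s" using Ppsd subsetD[OF sub a(1)] subsetD[OF sub a(2)] unfolding psd_on_def by blast
    then show "submatrix ?J Z s t = submatrix ?J Z t s"
      using a unfolding submatrix_def by simp
  next
    fix v :: "nat list \<Rightarrow> real"
    define v' where "v' s = (if s \<in> ?J then v s else 0)" for s
    have "(\<Sum>s\<in>?J. \<Sum>t\<in>?J. v s * submatrix ?J Z s t * v t) = (\<Sum>s\<in>?J. \<Sum>t\<in>?J. v' s * Z s t * v' t)"
      by (intro sum.cong refl) (simp add: v'_def submatrix_def)
    also have "\<dots> = (\<Sum>s\<in>?I. \<Sum>t\<in>?J. v' s * Z s t * v' t)"
      by (rule sum.mono_neutral_left[OF finite_strs_le sub]) (simp add: v'_def)
    also have "\<dots> = (\<Sum>s\<in>?I. \<Sum>t\<in>?I. v' s * Z s t * v' t)"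
      by (intro sum.cong refl sum.mono_neutral_left[OF finite_strs_le sub]) (simp add: v'_def)
    finally show "0 \<le> (\<Sum>s\<in>?J. \<Sum>t\<in>?J. v s * submatrix ?J Z s t * v t)"
      using Ppsd unfolding psd_on_def by simp
  qed
  have "pseudomoment_on ?J (submatrix ?J Z)"
    unfolding pseudomoment_on_def
  proof (intro conjI allI impI ballI)
    fix s t assume "s \<notin> ?J \<or> t \<notin> ?J"
    then show "submatrix ?J Z s t = 0" by (auto simp: submatrix_def)
  next
    show "psd_on ?J (submatrix ?J Z)" by (rule psd)
  next
    fix s t s' t' assume a: "s \<in> ?J" "t \<in> ?J" "s' \<in> ?J" "t' \<in> ?J"
      "odd_syms (s @ t) = odd_syms (s' @ t')"
    have "Z s t = Z s' t'"
      using Pc subsetD[OF sub a(1)] subsetD[OF sub a(2)] subsetD[OF sub a(3)] subsetD[OF sub a(4)] a(5) by blast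
    then show "submatrix ?J Z s t = submatrix ?J Z s' t'"
      using a unfolding submatrix_def by simp
  next
    fix s t assume a: "s \<in> ?J" "t \<in> ?J" "odd_syms (s @ t) = {}"
    have "Z s t = 1"
      using P1 subsetD[OF sub a(1)] subsetD[OF sub a(2)] a(3) by blast
    then show "submatrix ?J Z s t = 1"
      using a unfolding submatrix_def by simp
  qed
  then show ?thesis by (simp add: truncated_pm_def)
qed

lemma hard_dir:
  assumes Zt: "Zt \<in> truncated_pm N d" and N: "0 < N"
  shows "\<exists>Z\<in>complete_pm N d. submatrix (strs_eq N (d div 2)) Z = Zt"
proof -
  define k where "k = d div 2"
  let ?I = "strs_le N k" and ?J = "strs_eq N k"
  have P: "pseudomoment_on ?J Zt" using Zt by (simp add: truncated_pm_def k_def)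
  define f where "f s = s @ replicate (k - length s) (1::nat)" for s
  define Z where "Z s t = (if s \<in> ?I \<and> t \<in> ?I \<and> even (length s + length t) then Zt (f s) (f t) else 0)" for s t
  have f_in: "f s \<in> ?J" if "s \<in> ?I" for s
    using that N unfolding f_def strs_le_def strs_eq_def by auto
  have f_id: "f s = s" if "s \<in> ?J" for s
    using that unfolding f_def strs_eq_def by auto
  have JI: "?J \<subseteq> ?I" by (rule strs_eq_sub)
  have odd_f: "odd_syms (f s @ f t) = odd_syms (s @ t)"
    if "s \<in> ?I" "t \<in> ?I" "even (length s + length t)" for s t
  proof -
    have le: "length s \<le> k" "length t \<le> k" using that unfolding strs_le_def by auto
    have ev: "even ((k - length s) + (k - length t))" using le that(3) by presburger
    show ?thesis unfolding odd_syms_def f_def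
      using ev by (auto simp: count_list_replicate')
  qed
  have par: "even (length s + length t) = even (length s' + length t')"
    if "odd_syms (s @ t) = odd_syms (s' @ t')" for s t s' t' :: "nat list"
    using parity_odd_syms[of "s @ t"] parity_odd_syms[of "s' @ t'"] that by simp
  note PP = P[unfolded pseudomoment_on_def]
  note Pz = conjunct1[OF PP]
  note Ppsd = conjunct1[OF conjunct2[OF PP]]
  note Pc = conjunct1[OF conjunct2[OF conjunct2[OF PP]]]
  note P1 = conjunct2[OF conjunct2[OF conjunct2[OF PP]]]
  have psd: "psd_on ?I Z"
    unfolding psd_on_def
  proof (intro conjI allI ballI)
    fix s t assume "s \<in> ?I" "t \<in> ?I"
    then show "Z s t = Z t s" using Ppsd f_in unfolding psd_on_def Z_def by (auto simp: add.commute)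
  next
    fix v :: "nat list \<Rightarrow> real"
    define w where "w p s = (if even (length s + p) then v s else 0)" for p :: nat and s
    have eq: "v s * Z s t * v t = (\<Sum>p\<in>{0,1}. w p s * Zt (f s) (f t) * w p t)"
      if "s \<in> ?I" "t \<in> ?I" for s t
      using that unfolding Z_def w_def by auto
    have "(\<Sum>s\<in>?I. \<Sum>t\<in>?I. v s * Z s t * v t) = (\<Sum>s\<in>?I. \<Sum>t\<in>?I. \<Sum>p\<in>{0,1}. w p s * Zt (f s) (f t) * w p t)"
      using eq by simp
    also have "\<dots> = (\<Sum>s\<in>?I. \<Sum>p\<in>{0,1}. \<Sum>t\<in>?I. w p s * Zt (f s) (f t) * w p t)"
      by (intro sum.cong refl sum.swap)
    also have "\<dots> = (\<Sum>p\<in>{0,1}. \<Sum>s\<in>?I. \<Sum>t\<in>?I. w p s * Zt (f s) (f t) * w p t)"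
      by (rule sum.swap)
    also have "\<dots> \<ge> 0"
      by (intro sum_nonneg pullback_psd[OF finite_strs_le finite_strs_eq])
         (use f_in Ppsd in \<open>auto simp: psd_on_def\<close>)
    finally show "0 \<le> (\<Sum>s\<in>?I. \<Sum>t\<in>?I. v s * Z s t * v t)" .
  qed
  have "pseudomoment_on ?I Z"
    unfolding pseudomoment_on_def
  proof (intro conjI allI impI ballI)
    fix s t assume "s \<notin> ?I \<or> t \<notin> ?I"
    then show "Z s t = 0" by (auto simp: Z_def)
  next
    show "psd_on ?I Z" by (rule psd)
  next
    fix s t s' t' assume a: "s \<in> ?I" "t \<in> ?I" "s' \<in> ?I" "t' \<in> ?I"
      "odd_syms (s @ t) = odd_syms (s' @ t')"
    show "Z s t = Z s' t'"
    proof (cases "even (length s + length t)")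
      case True
      then have T2: "even (length s' + length t')" using par[OF a(5)] by simp
      have "odd_syms (f s @ f t) = odd_syms (f s' @ f t')"
        using odd_f[OF a(1,2) True] odd_f[OF a(3,4) T2] a(5) by simp
      then show ?thesis using Pc f_in a True T2 unfolding Z_def by simp
    next
      case False
      then have "\<not> even (length s' + length t')" using par[OF a(5)] by simp
      then show ?thesis using False unfolding Z_def by simp
    qed
  next
    fix s t assume a: "s \<in> ?I" "t \<in> ?I" "odd_syms (s @ t) = {}"
    have ev: "even (length s + length t)" using parity_odd_syms[of "s @ t"] a(3) by simp
    have "odd_syms (f s @ f t) = {}" using odd_f[OF a(1,2) ev] a(3) by simp
    then show "Z s t = 1" using P1 f_in a ev unfolding Z_def by simp
  qed
  then have Zc: "Z \<in> complete_pm N d" by (simp add: complete_pm_def k_def)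
  have "submatrix ?J Z = Zt"
  proof (intro ext)
    fix s t
    show "submatrix ?J Z s t = Zt s t"
    proof (cases "s \<in> ?J \<and> t \<in> ?J")
      case True
      then have "length s = k" "length t = k" unfolding strs_eq_def by auto
      then show ?thesis using True JI f_id unfolding submatrix_def Z_def by auto
    next
      case False
      then show ?thesis using Pz unfolding submatrix_def by auto
    qed
  qed
  then have "submatrix (strs_eq N (d div 2)) Z = Zt" by (simp only: k_def)
  then show ?thesis by (rule bexI[OF _ Zc])
qed

lemma hard_dir0:
  assumes Zt: "Zt \<in> truncated_pm N d" and N: "N = 0" and d: "0 < d" "even d"
  shows "\<exists>Z\<in>complete_pm N d. submatrix (strs_eq N (d div 2)) Z = Zt"
proof -
  define k where "k = d div 2"
  have k: "k > 0" using d unfolding k_def by (auto elim!: evenE)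
  have J: "strs_eq N k = {}" using k N unfolding strs_eq_def by auto
  have I: "strs_le N k = {[]}" using N unfolding strs_le_def by auto
  have P: "pseudomoment_on {} Zt" using Zt J by (simp add: truncated_pm_def k_def)
  then have Z0: "Zt = (\<lambda>s t. 0)" unfolding pseudomoment_on_def by auto
  define Z :: "nat list \<Rightarrow> nat list \<Rightarrow> real" where "Z s t = (if s = [] \<and> t = [] then 1 else 0)" for s t
  have "pseudomoment_on {[]} Z"
    unfolding pseudomoment_on_def psd_on_def
  proof (intro conjI allI impI ballI)
    fix s t :: "nat list" assume "s \<notin> {[]} \<or> t \<notin> {[]}"
    then show "Z s t = 0" by (auto simp: Z_def)
  next
    fix v :: "nat list \<Rightarrow> real"
    show "0 \<le> (\<Sum>s\<in>{[]}. \<Sum>t\<in>{[]}. v s * Z s t * v t)" by (simp add: Z_def)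
  qed (auto simp: Z_def)
  then have "Z \<in> complete_pm N d" using I by (simp add: complete_pm_def k_def)
  moreover have "submatrix (strs_eq N (d div 2)) Z = Zt"
    using J Z0 unfolding k_def submatrix_def by auto
  ultimately show ?thesis by blast
qed

theorem mainTheorem14:
  fixes N d :: nat
  assumes "even d" and "0 < d"
  shows "truncated_pm N d = submatrix (strs_eq N (d div 2)) ` complete_pm N d"
proof
  show "submatrix (strs_eq N (d div 2)) ` complete_pm N d \<subseteq> truncated_pm N d"
    using easy_dir by blast
next
  show "truncated_pm N d \<subseteq> submatrix (strs_eq N (d div 2)) ` complete_pm N d"
  proof
    fix Zt assume "Zt \<in> truncated_pm N d"
    then have "\<exists>Z\<in>complete_pm N d. submatrix (strs_eq N (d div 2)) Z = Zt"
    proof (cases "N = 0")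
      case True
      then show ?thesis using hard_dir0[OF \<open>Zt \<in> truncated_pm N d\<close> True assms(2,1)] by blast
    next
      case False
      then show ?thesis using hard_dir[OF \<open>Zt \<in> truncated_pm N d\<close>] by simp
    qed
    then show "Zt \<in> submatrix (strs_eq N (d div 2)) ` complete_pm N d" by force
  qed
qed

end
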